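(* For every $n\in\mathbb N$, Thompson's group $T$ acts transitively, via $t\cdot x=\iota(t)(x)$, on the set $\Lambda_n$ of $n$-tuples $(x_1,\ldots,x_n)$ of pairwise distinct elements of $Z$ which are cyclically ordered with respect to $\le_{\rm lex}$ (i.e. some cyclic rotation $(x_k,\ldots,x_n,x_1,\ldots,x_{k-1})$ is strictly $\le_{\rm lex}$-increasing).
   Context: Let $\{0,1\}^*$ be the finite words over $\{0,1\}$ (empty word $\varepsilon$) and $Z=\{0,1\}^*\cup\{\zeta\}$ for an extra symbol $\zeta$. Order $Z$ by $\le_{\rm lex}$: for words $x,y$ append the infinite string $\tfrac12\tfrac12\cdots$ and compare lexicographically with $0<\tfrac12<1$; $\zeta$ is larger than all words. A finite rooted binary subtree is a finite prefix-closed set of words containing $\varepsilon$ in which each element has both or neither of its children $x0,x1$; leaves are elements with no children, nodes the others; for such $R$ let $b_R:\mathrm{nodes}(R)\cup\{\zeta\}\to\mathrm{leaves}(R)$ be the unique $\le_{\rm lex}$-preserving bijection. Thompson's group $T$ is the group of homeomorphisms $v$ of $\{0,1\}^{\mathbb N}$ for which there are finite rooted binary subtrees $L,R$ with leaves $\ell_1<_{\rm lex}\cdots<_{\rm lex}\ell_k$, $r_1<_{\rm lex}\cdots<_{\rm lex}r_k$, and a cyclic shift $f(\ell_i)=r_{i+c \bmod k}$, such that $v(\ell\omega)=f(\ell)\omega$. Define the bijection $\iota(v)$ of $Z$ by $\iota(v)(x)=b_R^{-1}(f(b_L(x)))$ for $x\in\mathrm{nodes}(L)\cup\{\zeta\}$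 and $\iota(v)(\ell s)=f(\ell)s$ for $\ell\in\mathrm{leaves}(L)$, $s\in\{0,1\}^*$; this is independent of the choice of $(L,R,f)$ and defines an action of $T$ on $Z$. *)

theory Defs
  imports Main
begin

text \<open>Words over {0,1} are bool lists (False = 0, True = 1). The set Z = words plus an
extra symbol zeta.\<close>

datatype zel = W "bool list" | Zeta

text \<open>Lexicographic order: append 1/2 1/2 ... and compare with 0 < 1/2 < 1.
We code 0, 1/2, 1 as 0, 1, 2.\<close>

definition wcode :: "bool list \<Rightarrow> nat \<Rightarrow> nat" where
  "wcode x i = (if i < length x then (if x ! i then 2 else 0) else 1)"

definition wlt :: "bool list \<Rightarrow> bool list \<Rightarrow> bool" where
  "wlt x y \<longleftrightarrow> (\<exists>i. wcode x i < wcode y i \<and> (\<forall>j<i. wcode x j = wcode y j))"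

fun zlt :: "zel \<Rightarrow> zel \<Rightarrow> bool" where
  "zlt (W x) (W y) = wlt x y"
| "zlt (W x) Zeta = True"
| "zlt Zeta _ = False"

definition is_tree :: "bool list set \<Rightarrow> bool" where
  "is_tree R \<longleftrightarrow> finite R \<and> [] \<in> R \<and> (\<forall>x y. x @ y \<in> R \<longrightarrow> x \<in> R)
     \<and> (\<forall>x\<in>R. (x @ [False] \<in> R) = (x @ [True] \<in> R))"

definition tnodes :: "bool list set \<Rightarrow> bool list set" where
  "tnodes R = {x \<in> R. x @ [False] \<in> R}"

definition tleaves :: "bool list set \<Rightarrow> bool list set" where
  "tleaves R = {x \<in> R. x @ [False] \<notin> R}"

definition enum :: "bool list set \<Rightarrow> bool list list" where
  "enum S = (THE xs. sorted_wrt wlt xs \<and> set xs = S)"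

definition nodesZ :: "bool list set \<Rightarrow> zel list" where
  "nodesZ R = map W (enum (tnodes R)) @ [Zeta]"

definition conc :: "bool list \<Rightarrow> (nat \<Rightarrow> bool) \<Rightarrow> (nat \<Rightarrow> bool)" where
  "conc l w = (\<lambda>n. if n < length l then l ! n else w (n - length l))"

definition thompson_rep :: "((nat \<Rightarrow> bool) \<Rightarrow> (nat \<Rightarrow> bool)) \<Rightarrow> bool list set \<Rightarrow> bool list set \<Rightarrow> nat \<Rightarrow> bool" where
  "thompson_rep v L R c \<longleftrightarrow> is_tree L \<and> is_tree R \<and>
     (let ls = enum (tleaves L); rs = enum (tleaves R); k = length ls in
       length rs = k \<and>
       (\<forall>i<k. \<forall>w. v (conc (ls ! i) w) = conc (rs ! ((i + c) mod k)) w))"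

definition ThompsonT :: "((nat \<Rightarrow> bool) \<Rightarrow> (nat \<Rightarrow> bool)) set" where
  "ThompsonT = {v. \<exists>L R c. thompson_rep v L R c}"

definition iota_data :: "bool list set \<Rightarrow> bool list set \<Rightarrow> nat \<Rightarrow> zel \<Rightarrow> zel" where
  "iota_data L R c x =
     (let ls = enum (tleaves L); rs = enum (tleaves R); k = length ls;
          nL = nodesZ L; nR = nodesZ R in
      if x \<in> set nL then nR ! (((THE j. j < length nL \<and> nL ! j = x) + c) mod k)
      else (case x of
              W w \<Rightarrow> (let i = (THE i. i < k \<and> (\<exists>s. w = ls ! i @ s)) in
                        W (rs ! ((i + c) mod k) @ drop (length (ls ! i)) w))
            | Zeta \<Rightarrow> Zeta))"

text \<open>iota(v): independent of the chosen representation (as stated in the paper),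
so we may pick any one.\<close>

definition iota :: "((nat \<Rightarrow> bool) \<Rightarrow> (nat \<Rightarrow> bool)) \<Rightarrow> zel \<Rightarrow> zel" where
  "iota v = (SOME g. \<exists>L R c. thompson_rep v L R c \<and> g = iota_data L R c)"

definition Lambda :: "nat \<Rightarrow> zel list set" where
  "Lambda n = {xs. length xs = n \<and> distinct xs \<and> (\<exists>k. sorted_wrt zlt (rotate k xs))}"

end

theory Submission
  imports Defs Complex_Main
begin


lemma wcode_Nil[simp]: "wcode [] i = 1" by (simp add: wcode_def)
lemma wcode_Cons0[simp]: "wcode (a#x) 0 = (if a then 2 else 0)" by (simp add: wcode_def)
lemma wcode_ConsS[simp]: "wcode (a#x) (Suc i) = wcode x i" by (simp add: wcode_def)

lemma ex_nat_split': "(\<exists>i::nat. P i) \<longleftrightarrow> P 0 \<or> (\<exists>i. P (Suc i))"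
  by (metis not0_implies_Suc)

lemma all_less_Suc': "(\<forall>j<Suc i. P j) \<longleftrightarrow> P 0 \<and> (\<forall>j<i. P (Suc j))"
  by (metis less_Suc_eq_0_disj Suc_less_eq zero_less_Suc)

lemma wlt_Cons_Cons: "wlt (a#x) (b#y) \<longleftrightarrow> (if a = b then wlt x y else b)"
  unfolding wlt_def
  apply (subst ex_nat_split')
  apply (simp only: all_less_Suc')
  by auto

lemma wlt_Nil_Nil: "\<not> wlt [] []" unfolding wlt_def by simp

lemma wlt_Nil_Cons: "wlt [] (b#y) \<longleftrightarrow> b"
  unfolding wlt_def
  apply (subst ex_nat_split')
  apply (simp only: all_less_Suc')
  by auto

lemma wlt_Cons_Nil: "wlt (a#x) [] \<longleftrightarrow> \<not> a"
  unfolding wlt_def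
  apply (subst ex_nat_split')
  apply (simp only: all_less_Suc')
  by auto

fun wv :: "bool list \<Rightarrow> real" where
  "wv [] = 1/2"
| "wv (b#x) = (if b then 1/2 else 0) + wv x / 2"

lemma wv_bounds: "0 < wv x \<and> wv x < 1"
  by (induction x) auto

lemma wlt_iff: "wlt x y \<longleftrightarrow> wv x < wv y"
proof (induction x arbitrary: y)
  case Nil
  then show ?case
    apply (cases y)
    apply (auto simp: wlt_Nil_Nil)[1]
    subgoal for b y' using wv_bounds[of y'] by (auto simp: wlt_Nil_Cons)
    done
next
  case (Cons a x)
  then show ?case using wv_bounds[of x]
    apply (cases y)
    apply (auto simp: wlt_Cons_Nil)[1]
    subgoal for b y' using wv_bounds[of y'] by (auto simp: wlt_Cons_Cons)
    done
qed

lemma wv_inj: "wv x = wv y \<Longrightarrow> x = y"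
proof (induction x arbitrary: y)
  case Nil
  then show ?case
    apply (cases y)
    apply (auto split: if_splits)[1]
    subgoal for b y' using wv_bounds[of y'] by (auto split: if_splits)
    done
next
  case (Cons a x)
  then show ?case using wv_bounds[of x]
    apply (cases y)
    apply (auto split: if_splits)[1]
    subgoal for b y' using wv_bounds[of y'] by (auto split: if_splits)
    done
qed



datatype tr = Lf | Nd tr tr

fun wds :: "tr \<Rightarrow> bool list set" where
  "wds Lf = {[]}"
| "wds (Nd a b) = insert [] (Cons False ` wds a \<union> Cons True ` wds b)"

fun lvs :: "tr \<Rightarrow> bool list list" where
  "lvs Lf = [[]]"
| "lvs (Nd a b) = map (Cons False) (lvs a) @ map (Cons True) (lvs b)"

fun nds :: "tr \<Rightarrow> bool list list" where
  "nds Lf = []"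
| "nds (Nd a b) = map (Cons False) (nds a) @ [[]] @ map (Cons True) (nds b)"

lemma Cons_in_image[simp]: "(a # x \<in> Cons b ` S) = (a = b \<and> x \<in> S)" by auto
lemma Nil_in_image[simp]: "([] \<in> Cons b ` S) = False" by auto

lemma len_nds: "length (lvs t) = Suc (length (nds t))"
  by (induction t) auto

lemma lvs_ne: "lvs t \<noteq> []" by (induction t) auto

lemma Nil_wds: "[] \<in> wds t" by (cases t) auto

lemma wds_finite: "finite (wds t)" by (induction t) auto

lemma wds_prefix: "x @ y \<in> wds t \<Longrightarrow> x \<in> wds t"
proof (induction t arbitrary: x y)
  case Lf then show ?case by simp
next
  case (Nd a b)
  show ?case
  proof (cases x)
    case (Cons c x')
    then show ?thesis using Nd.prems Nd.IH(1)[of x' y] Nd.IH(2)[of x' y] by (cases c) simp_all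
  qed (simp add: Nil_wds)
qed

lemma wds_child: "x \<in> wds t \<Longrightarrow> (x @ [False] \<in> wds t) = (x @ [True] \<in> wds t)"
proof (induction t arbitrary: x)
  case Lf then show ?case by simp
next
  case (Nd a b)
  show ?case
  proof (cases x)
    case (Cons c x')
    then show ?thesis using Nd.prems Nd.IH(1)[of x'] Nd.IH(2)[of x'] by (cases c) simp_all
  qed (simp add: Nil_wds)
qed

lemma is_tree_wds: "is_tree (wds t)"
  unfolding is_tree_def using wds_finite Nil_wds wds_prefix wds_child by blast

lemma lvs_iff: "x \<in> set (lvs t) \<longleftrightarrow> x \<in> wds t \<and> x @ [False] \<notin> wds t"
proof (induction t arbitrary: x)
  case Lf then show ?case by auto
next
  case (Nd a b)
  show ?case
  proof (cases x)
    case (Cons c x')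
    then show ?thesis using Nd.IH(1)[of x'] Nd.IH(2)[of x'] by (cases c) simp_all
  qed (simp add: Nil_wds)
qed

lemma nds_iff: "x \<in> set (nds t) \<longleftrightarrow> x \<in> wds t \<and> x @ [False] \<in> wds t"
proof (induction t arbitrary: x)
  case Lf then show ?case by auto
next
  case (Nd a b)
  show ?case
  proof (cases x)
    case (Cons c x')
    then show ?thesis using Nd.IH(1)[of x'] Nd.IH(2)[of x'] by (cases c) simp_all
  qed (simp add: Nil_wds)
qed

lemma tleaves_wds: "tleaves (wds t) = set (lvs t)"
  unfolding tleaves_def using lvs_iff by blast

lemma tnodes_wds: "tnodes (wds t) = set (nds t)"
  unfolding tnodes_def using nds_iff by blast

lemma wlt_eq: "wlt = (\<lambda>x y. wv x < wv y)" by (auto simp: wlt_iff fun_eq_iff)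

lemma sorted_wlt_map: "sorted_wrt wlt xs \<longleftrightarrow> sorted_wrt (<) (map wv xs)"
  by (simp add: sorted_wrt_map wlt_eq)

lemma wv_Cons_F: "wv (False # x) < 1/2" using wv_bounds[of x] by simp
lemma wv_Cons_T: "wv (True # x) > 1/2" using wv_bounds[of x] by simp

lemma sorted_lvs: "sorted_wrt wlt (lvs t)"
proof (induction t)
  case Lf then show ?case by simp
next
  case (Nd a b)
  have "wlt (False#x) (True#y)" for x y by (simp add: wlt_Cons_Cons)
  with Nd show ?case
by (simp add: sorted_wrt_append sorted_wrt_map wlt_Cons_Cons)
qed

lemma sorted_nds: "sorted_wrt wlt (nds t)"
proof (induction t)
  case Lf then show ?case by simp
next
  case (Nd a b)
  have "wlt (False#x) (True#y)" for x y by (simp add: wlt_Cons_Cons)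
  with Nd show ?case
by (simp add: sorted_wrt_append sorted_wrt_map wlt_Cons_Cons wlt_Cons_Nil wlt_Nil_Cons)
qed

lemma enum_eq: assumes "sorted_wrt wlt xs" shows "enum (set xs) = xs"
proof -
  have u: "ys = xs" if "sorted_wrt wlt ys" "set ys = set xs" for ys
  proof -
    have "map wv ys = map wv xs"
      using that assms by (intro strict_sorted_equal) (auto simp: sorted_wlt_map)
    moreover have "inj wv" using wv_inj by (auto intro: injI)
    ultimately show ?thesis by (simp add: inj_map_eq_map)
  qed
  show ?thesis unfolding enum_def
    by (rule the_equality) (use assms u in auto)
qed

lemma enum_lvs: "enum (tleaves (wds t)) = lvs t"
  by (simp add: tleaves_wds enum_eq sorted_lvs)

lemma enum_nds: "enum (tnodes (wds t)) = nds t"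
  by (simp add: tnodes_wds enum_eq sorted_nds)

lemma nodesZ_wds: "nodesZ (wds t) = map W (nds t) @ [Zeta]"
  by (simp add: nodesZ_def enum_nds)

lemma tree_exists_aux:
  "\<forall>S. is_tree S \<and> (\<forall>w\<in>S. length w \<le> n) \<longrightarrow> (\<exists>t. S = wds t)"
proof (induction n)
  case 0
  show ?case
  proof (intro allI impI)
    fix S assume "is_tree S \<and> (\<forall>w\<in>S. length w \<le> 0)"
    then have "S = {[]}" unfolding is_tree_def by auto
    then show "\<exists>t. S = wds t" by (intro exI[of _ Lf]) simp
  qed
next
  case (Suc n)
  show ?case
  proof (intro allI impI)
    fix S assume h: "is_tree S \<and> (\<forall>w\<in>S. length w \<le> Suc n)"
    then have fin: "finite S" and nil: "[] \<in> S" and pre: "\<And>x y. x @ y \<in> S \<Longrightarrow> x \<in> S"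
      and ch: "\<And>x. x \<in> S \<Longrightarrow> (x @ [False] \<in> S) = (x @ [True] \<in> S)"
      and len: "\<And>w. w \<in> S \<Longrightarrow> length w \<le> Suc n"
      unfolding is_tree_def by blast+
    show "\<exists>t. S = wds t"
    proof (cases "[False] \<in> S")
      case False
      then have "[True] \<notin> S" using ch[OF nil] by simp
      have "S = {[]}"
      proof (intro set_eqI iffI)
        fix w assume "w \<in> S"
        show "w \<in> {[]}"
        proof (cases w)
          case (Cons b w')
          then have "[b] \<in> S" using pre[of "[b]" w'] \<open>w \<in> S\<close> by simp
          then show ?thesis using False \<open>[True] \<notin> S\<close> by (cases b) auto
        qed simp
      qed (use nil in auto)
      then show ?thesis by (intro exI[of _ Lf]) simp
    next
      case True
      define S0 where "S0 = {w. False # w \<in> S}"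
      define S1 where "S1 = {w. True # w \<in> S}"
      have tr: "is_tree (Sb)" if "Sb = {w. b # w \<in> S}" "[b] \<in> S" for Sb b
        unfolding is_tree_def
      proof (intro conjI allI impI ballI)
        have "Sb = Cons b -` S" using that by auto
        then show "finite Sb" using fin by (simp add: finite_vimageI)
        show "[] \<in> Sb" using that by simp
        fix x y assume "x @ y \<in> Sb" then show "x \<in> Sb" using that pre[of "b#x" y] by simp
      next
        fix x assume "x \<in> Sb" then show "(x @ [False] \<in> Sb) = (x @ [True] \<in> Sb)"
          using that ch[of "b#x"] by simp
      qed
      have "[True] \<in> S" using True ch[OF nil] by simp
      have t0: "is_tree S0" by (rule tr[OF S0_def True])
      have t1: "is_tree S1" by (rule tr[OF S1_def \<open>[True] \<in> S\<close>])
      have l0: "\<forall>w\<in>S0. length w \<le> n" using len S0_def by fastforce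
      have l1: "\<forall>w\<in>S1. length w \<le> n" using len S1_def by fastforce
      obtain a where a: "S0 = wds a" using Suc.IH t0 l0 by blast
      obtain b where b: "S1 = wds b" using Suc.IH t1 l1 by blast
      have "S = insert [] (Cons False ` S0 \<union> Cons True ` S1)"
      proof (intro set_eqI iffI)
        fix w assume "w \<in> S" then show "w \<in> insert [] (Cons False ` S0 \<union> Cons True ` S1)"
          unfolding S0_def S1_def apply (cases w) apply simp subgoal for c w' by (cases c) simp_all done
      qed (use nil S0_def S1_def in auto)
      then show ?thesis using a b by (intro exI[of _ "Nd a b"]) simp
    qed
  qed
qed

lemma tree_exists: assumes "is_tree S" shows "\<exists>t. S = wds t"
proof -
  have "finite S" using assms is_tree_def by blast
  then obtain n where "\<forall>w\<in>S. length w \<le> n"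
    using finite_nat_set_iff_bounded_le[of "length ` S"] by auto
  then show ?thesis using tree_exists_aux assms by blast
qed

lemma word_cases: "w \<in> set (nds t) \<or> (\<exists>l\<in>set (lvs t). \<exists>s. w = l @ s)"
proof (induction t arbitrary: w)
  case Lf then show ?case by simp
next
  case (Nd a b)
  show ?case
  proof (cases w)
    case (Cons c w')
    show ?thesis
    proof (cases c)
      case True
      from Nd.IH(2)[of w'] show ?thesis
      proof
        assume "w' \<in> set (nds b)" then show ?thesis using Cons True by simp
      next
        assume "\<exists>l\<in>set (lvs b). \<exists>s. w' = l @ s"
        then obtain l s where "l \<in> set (lvs b)" "w' = l @ s" by blast
        then show ?thesis using Cons True by (intro disjI2 bexI[of _ "True # l"]) auto
      qed
    next
      case False
      from Nd.IH(1)[of w'] show ?thesis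
      proof
        assume "w' \<in> set (nds a)" then show ?thesis using Cons False by simp
      next
        assume "\<exists>l\<in>set (lvs a). \<exists>s. w' = l @ s"
        then obtain l s where "l \<in> set (lvs a)" "w' = l @ s" by blast
        then show ?thesis using Cons False by (intro disjI2 bexI[of _ "False # l"]) auto
      qed
    qed
  qed simp
qed

lemma lvs_prefix: "l \<in> set (lvs t) \<Longrightarrow> l' \<in> set (lvs t) \<Longrightarrow> l' = l @ s \<Longrightarrow> s = []"
proof (induction t arbitrary: l l')
  case Lf then show ?case by simp
next
  case (Nd a b)
  obtain c l0 where l: "l = c # l0" and l0: "l0 \<in> set (lvs (if c then b else a))"
  proof -
    from Nd.prems(1) consider (F) l0 where "l = False#l0" "l0 \<in> set (lvs a)"
      | (T) l0 where "l = True#l0" "l0 \<in> set (lvs b)" by auto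
    then show thesis
    proof cases
      case (F l0) then show ?thesis by (intro that[of False l0]) auto
    next
      case (T l0) then show ?thesis by (intro that[of True l0]) auto
    qed
  qed
  from Nd.prems l have l': "l' = c # (l0 @ s)" by simp
  with Nd.prems(2) have "l0 @ s \<in> set (lvs (if c then b else a))" by (cases c) auto
  then show ?case using Nd.IH l0 by (cases c) auto
qed

lemma lvs_not_nds: "l \<in> set (lvs t) \<Longrightarrow> l @ s \<notin> set (nds t)"
proof (induction t arbitrary: l)
  case Lf then show ?case by simp
next
  case (Nd a b)
  obtain c l0 where l: "l = c # l0" and l0: "l0 \<in> set (lvs (if c then b else a))"
  proof -
    from Nd.prems(1) consider (F) l0 where "l = False#l0" "l0 \<in> set (lvs a)"
      | (T) l0 where "l = True#l0" "l0 \<in> set (lvs b)" by auto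
    then show thesis
    proof cases
      case (F l0) then show ?thesis by (intro that[of False l0]) auto
    next
      case (T l0) then show ?thesis by (intro that[of True l0]) auto
    qed
  qed
  show ?case
  proof
    assume "l @ s \<in> set (nds (Nd a b))"
    then have "l0 @ s \<in> set (nds (if c then b else a))" using l by (cases c) auto
    then show False using Nd.IH l0 by (cases c) auto
  qed
qed

lemma distinct_lvs: "distinct (lvs t)"
proof -
  have "distinct (map wv (lvs t))" using sorted_lvs[of t] by (simp add: sorted_wlt_map strict_sorted_iff)
  then show ?thesis by (simp add: distinct_map)
qed

lemma distinct_nds: "distinct (nds t)"
proof -
  have "distinct (map wv (nds t))" using sorted_nds[of t] by (simp add: sorted_wlt_map strict_sorted_iff)
  then show ?thesis by (simp add: distinct_map)
qed



lemma nth_lvs_Nd: "j < length (lvs a) + length (lvs b) \<Longrightarrow> lvs (Nd a b) ! j = (if j < length (lvs a) then False # (lvs a ! j) else True # (lvs b ! (j - length (lvs a))))"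
  by (simp add: nth_append)

lemma length_lvs_Nd[simp]: "length (lvs (Nd a b)) = length (lvs a) + length (lvs b)" by simp
lemma length_nds_Nd[simp]: "length (nds (Nd a b)) = Suc (length (nds a) + length (nds b))" by simp

lemma nth_nds_Nd: "i \<le> length (nds a) + length (nds b) \<Longrightarrow> nds (Nd a b) ! i = (if i < length (nds a) then False # (nds a ! i)
   else if i = length (nds a) then [] else True # (nds b ! (i - Suc (length (nds a)))))"
  by (simp add: nth_append)

lemma S1: "\<exists>m. lvs t ! 0 = replicate m False"
proof (induction t)
  case Lf then show ?case by (intro exI[of _ 0]) simp
next
  case (Nd a b)
  then obtain m where "lvs a ! 0 = replicate m False" by blast
  then show ?case using lvs_ne[of a] by (intro exI[of _ "Suc m"]) (simp del: lvs.simps add: nth_lvs_Nd)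
qed

lemma S2: "\<exists>m. lvs t ! (length (lvs t) - 1) = replicate m True"
proof (induction t)
  case Lf then show ?case by (intro exI[of _ 0]) simp
next
  case (Nd a b)
  then obtain m where m: "lvs b ! (length (lvs b) - 1) = replicate m True" by blast
  have p: "length (lvs b) > 0" using lvs_ne[of b] by simp
  have q1: "\<not> (length (lvs a) + length (lvs b) - 1 < length (lvs a))" using p by linarith
  have q2: "length (lvs a) + length (lvs b) - 1 - length (lvs a) = length (lvs b) - 1" using p by linarith
  have "lvs (Nd a b) ! (length (lvs (Nd a b)) - 1) = True # (lvs b ! (length (lvs b) - 1))"
    unfolding length_lvs_Nd using p q1 q2 by (subst nth_lvs_Nd) auto
  then show ?case using m by (intro exI[of _ "Suc m"]) simp
qed

lemma S3: "i < length (nds t) \<Longrightarrow> \<exists>m. lvs t ! (Suc i) = nds t ! i @ True # replicate m False"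
proof (induction t arbitrary: i)
  case Lf then show ?case by simp
next
  case (Nd a b)
  let ?na = "length (nds a)"
  have ka: "length (lvs a) = Suc ?na" by (rule len_nds)
  consider "i < ?na" | "i = ?na" | "i > ?na" by linarith
  then show ?case
  proof cases
    case 1
    then obtain m where "lvs a ! (Suc i) = nds a ! i @ True # replicate m False" using Nd.IH(1) by blast
    then show ?thesis using 1 ka by (intro exI[of _ m]) (simp del: lvs.simps nds.simps add: nth_lvs_Nd nth_nds_Nd len_nds)
  next
    case 2
    obtain m where "lvs b ! 0 = replicate m False" using S1 by blast
    then show ?thesis using 2 ka by (intro exI[of _ m]) (simp del: lvs.simps nds.simps add: nth_lvs_Nd nth_nds_Nd len_nds)
  next
    case 3
    define i' where "i' = i - Suc ?na"
    have "i' < length (nds b)" using Nd.prems 3 unfolding i'_def by simp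
    then obtain m where m: "lvs b ! (Suc i') = nds b ! i' @ True # replicate m False" using Nd.IH(2) by blast
    have "Suc i - length (lvs a) = Suc i'" using 3 ka unfolding i'_def by simp
    then show ?thesis using Nd.prems 3 ka m by (intro exI[of _ m]) (simp del: lvs.simps nds.simps add: nth_lvs_Nd nth_nds_Nd len_nds i'_def)
  qed
qed

lemma S4: "i < length (nds t) \<Longrightarrow> \<exists>m. lvs t ! i = nds t ! i @ False # replicate m True"
proof (induction t arbitrary: i)
  case Lf then show ?case by simp
next
  case (Nd a b)
  let ?na = "length (nds a)"
  have ka: "length (lvs a) = Suc ?na" by (rule len_nds)
  consider "i < ?na" | "i = ?na" | "i > ?na" by linarith
  then show ?case
  proof cases
    case 1
    then obtain m where "lvs a ! i = nds a ! i @ False # replicate m True" using Nd.IH(1) by blast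
    then show ?thesis using 1 ka by (intro exI[of _ m]) (simp del: lvs.simps nds.simps add: nth_lvs_Nd nth_nds_Nd len_nds)
  next
    case 2
    obtain m where "lvs a ! (length (lvs a) - 1) = replicate m True" using S2 by blast
    then show ?thesis using 2 ka by (intro exI[of _ m]) (simp del: lvs.simps nds.simps add: nth_lvs_Nd nth_nds_Nd len_nds)
  next
    case 3
    define i' where "i' = i - Suc ?na"
    have "i' < length (nds b)" using Nd.prems 3 unfolding i'_def by simp
    then obtain m where m: "lvs b ! i' = nds b ! i' @ False # replicate m True" using Nd.IH(2) by blast
    have "i - length (lvs a) = i'" using 3 ka unfolding i'_def by simp
    then show ?thesis using Nd.prems 3 ka m by (intro exI[of _ m]) (simp del: lvs.simps nds.simps add: nth_lvs_Nd nth_nds_Nd len_nds i'_def)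
  qed
qed

fun ex :: "tr \<Rightarrow> nat \<Rightarrow> tr" where
  "ex Lf i = Nd Lf Lf"
| "ex (Nd a b) i = (if i < length (lvs a) then Nd (ex a i) b else Nd a (ex b (i - length (lvs a))))"

lemma ex_nds: "i < length (lvs t) \<Longrightarrow> nds (ex t i) = take i (nds t) @ [lvs t ! i] @ drop i (nds t)"
proof (induction t arbitrary: i)
  case Lf then show ?case by simp
next
  case (Nd a b)
  have ka: "length (lvs a) = Suc (length (nds a))" by (rule len_nds)
  show ?case
  proof (cases "i < length (lvs a)")
    case True
    then show ?thesis using Nd.IH(1)[OF True] ka by (simp add: nth_append take_map drop_map)
  next
    case False
    then have i': "i - length (lvs a) < length (lvs b)" using Nd.prems by simp
    have e: "i - length (nds a) = Suc (i - Suc (length (nds a)))" using False ka by simp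
    have i2: "i - Suc (length (nds a)) < length (lvs b)" using i' ka by simp
    show ?thesis using False Nd.IH(2)[OF i'] ka i2 by (simp add: nth_append take_map drop_map e)
  qed
qed

lemma ex_lvs_len: "i < length (lvs t) \<Longrightarrow> length (lvs (ex t i)) = Suc (length (lvs t))"
  using ex_nds[of i t] len_nds[of t] len_nds[of "ex t i"] by simp

definition zs :: "tr \<Rightarrow> zel list" where "zs t = map W (nds t) @ [Zeta]"

lemma length_zs: "length (zs t) = length (lvs t)" by (simp add: zs_def len_nds)

lemma zs_ex: "i < length (lvs t) \<Longrightarrow> zs (ex t i) = take i (zs t) @ [W (lvs t ! i)] @ drop i (zs t)"
  using len_nds[of t] by (simp add: zs_def ex_nds take_map drop_map)

fun full :: "nat \<Rightarrow> tr" where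
  "full 0 = Lf"
| "full (Suc d) = Nd (full d) (full d)"

lemma nds_full: "set (nds (full d)) = {w. length w < d}"
proof (induction d)
  case 0 then show ?case by simp
next
  case (Suc d)
  show ?case
  proof (intro set_eqI iffI)
    fix w :: "bool list" assume "w \<in> set (nds (full (Suc d)))" then show "w \<in> {w. length w < Suc d}" using Suc by auto
  next
    fix w :: "bool list" assume "w \<in> {w. length w < Suc d}"
    then show "w \<in> set (nds (full (Suc d)))" using Suc
      apply (cases w) apply simp subgoal for c w' by (cases c) auto done
  qed
qed

lemma zs_last: "zs t ! (length (lvs t) - 1) = Zeta"
  using len_nds[of t] by (simp add: zs_def nth_append)

lemma distinct_zs: "distinct (zs t)"
  using distinct_nds[of t] by (auto simp: zs_def distinct_map inj_on_def)



lemma conc_Nil[simp]: "conc [] w = w" by (simp add: conc_def)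

lemma conc_append: "conc (l @ m) w = conc l (conc m w)"
  by (rule ext) (auto simp: conc_def nth_append)

lemma conc_rep_F: "conc (replicate m False) (\<lambda>_. False) = (\<lambda>_. False)"
  by (rule ext) (auto simp: conc_def)

fun Aseq :: "zel \<Rightarrow> nat \<Rightarrow> bool" where
  "Aseq (W x) = conc (x @ [True]) (\<lambda>_. False)"
| "Aseq Zeta = (\<lambda>_. False)"

lemma Aseq_W_len: "Aseq (W x) (length x)" by (simp add: conc_def)
lemma Aseq_W_after: "n > length x \<Longrightarrow> \<not> Aseq (W x) n" by (simp add: conc_def)
lemma Aseq_W_before: "n < length x \<Longrightarrow> Aseq (W x) n = x ! n" by (simp add: conc_def nth_append)

lemma Aseq_inj: assumes "Aseq z = Aseq z'" shows "z = z'"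
proof (cases z)
  case (W x)
  show ?thesis
  proof (cases z')
    case (W y)
    have "length x = length y"
    proof (rule ccontr)
      assume "length x \<noteq> length y"
      then consider "length x < length y" | "length y < length x" by linarith
      then show False
      proof cases
        case 1 then show ?thesis using assms \<open>z = W x\<close> W Aseq_W_len[of y] Aseq_W_after[of x "length y"] by simp
      next
        case 2 then show ?thesis using assms \<open>z = W x\<close> W Aseq_W_len[of x] Aseq_W_after[of y "length x"] by simp
      qed
    qed
    moreover have "x ! n = y ! n" if "n < length x" for n
      using that assms \<open>z = W x\<close> W Aseq_W_before[of n x] Aseq_W_before[of n y] \<open>length x = length y\<close>
      by metis
    ultimately show ?thesis using \<open>z = W x\<close> W by (simp add: nth_equalityI)
  next
    case Zeta
    then show ?thesis using assms \<open>z = W x\<close> Aseq_W_len[of x] by (metis Aseq.simps(2))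
  qed
next
  case Zeta
  then show ?thesis
  proof (cases z')
    case (W y)
    then show ?thesis using assms \<open>z = Zeta\<close> Aseq_W_len[of y] by (metis Aseq.simps(2))
  qed simp
qed

lemma A_zs: assumes "i < length (lvs t)"
  shows "conc (lvs t ! ((i + 1) mod length (lvs t))) (\<lambda>_. False) = Aseq (zs t ! i)"
proof (cases "i < length (nds t)")
  case True
  then obtain m where m: "lvs t ! (Suc i) = nds t ! i @ True # replicate m False" using S3 by blast
  have "(i + 1) mod length (lvs t) = Suc i" using True len_nds[of t] by simp
  moreover have "conc (True # replicate m False) (\<lambda>_. False) = conc [True] (\<lambda>_. False)"
    using conc_append[of "[True]" "replicate m False"] conc_rep_F by simp
  ultimately show ?thesis using m True
    by (simp add: zs_def nth_append conc_append conc_rep_F)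
next
  case False
  then have i: "i = length (nds t)" using assms len_nds[of t] by simp
  obtain m where m: "lvs t ! 0 = replicate m False" using S1 by blast
  have "(i + 1) mod length (lvs t) = 0" using i len_nds[of t] by simp
  then show ?thesis using m i by (simp add: zs_def nth_append conc_rep_F)
qed

lemma iota_data_unfold:
  "iota_data (wds tL) (wds tR) c x =
     (let ls = lvs tL; rs = lvs tR; k = length ls; nL = zs tL; nR = zs tR in
      if x \<in> set nL then nR ! (((THE j. j < length nL \<and> nL ! j = x) + c) mod k)
      else (case x of
              W w \<Rightarrow> (let i = (THE i. i < k \<and> (\<exists>s. w = ls ! i @ s)) in
                        W (rs ! ((i + c) mod k) @ drop (length (ls ! i)) w))
            | Zeta \<Rightarrow> Zeta))"
  unfolding iota_data_def enum_lvs nodesZ_wds zs_def by simp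

lemma ID_node: assumes "i < length (lvs tL)"
  shows "iota_data (wds tL) (wds tR) c (zs tL ! i) = zs tR ! ((i + c) mod length (lvs tL))"
proof -
  have i: "i < length (zs tL)" using assms length_zs by metis
  have "(THE j. j < length (zs tL) \<and> zs tL ! j = zs tL ! i) = i"
    using distinct_zs[of tL] i by (intro the_equality) (simp, metis nth_eq_iff_index_eq)
  then show ?thesis using i by (simp add: iota_data_unfold)
qed

lemma leaf_unique: assumes "i < length (lvs t)" "j < length (lvs t)" "lvs t ! i @ s = lvs t ! j @ s'"
  shows "i = j"
proof -
  have li: "lvs t ! i \<in> set (lvs t)" and lj: "lvs t ! j \<in> set (lvs t)" using assms by auto
  from assms(3) obtain us where "lvs t ! i = lvs t ! j @ us \<or> lvs t ! i @ us = lvs t ! j"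
    using append_eq_append_conv2[of "lvs t ! i" s "lvs t ! j" s'] by blast
  then have "lvs t ! i = lvs t ! j"
  proof
    assume h: "lvs t ! i = lvs t ! j @ us"
    then have "us = []" using lvs_prefix[OF lj li, of us] by simp
    then show ?thesis using h by simp
  next
    assume h: "lvs t ! i @ us = lvs t ! j"
    then have "us = []" using lvs_prefix[OF li lj, of us] by simp
    then show ?thesis using h by simp
  qed
  then show ?thesis using distinct_lvs[of t] assms(1,2) nth_eq_iff_index_eq by metis
qed

lemma ID_word: assumes "i < length (lvs tL)" "W (lvs tL ! i @ s) \<notin> set (zs tL)"
  shows "iota_data (wds tL) (wds tR) c (W (lvs tL ! i @ s)) = W (lvs tR ! ((i + c) mod length (lvs tL)) @ s)"
proof -
  have "(THE i'. i' < length (lvs tL) \<and> (\<exists>s'. lvs tL ! i @ s = lvs tL ! i' @ s')) = i"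
    using assms(1) leaf_unique[of _ tL] by (intro the_equality) blast+
  then show ?thesis using assms by (simp add: iota_data_unfold Let_def)
qed

lemma Z_cases:
  obtains (node) i where "i < length (lvs t)" "z = zs t ! i"
  | (word) i s where "i < length (lvs t)" "z = W (lvs t ! i @ s)" "z \<notin> set (zs t)"
proof (cases "z \<in> set (zs t)")
  case True
  then obtain i where "i < length (zs t)" "z = zs t ! i" by (metis in_set_conv_nth)
  then show ?thesis using node length_zs by metis
next
  case False
  then obtain w where w: "z = W w" "w \<notin> set (nds t)" by (cases z) (auto simp: zs_def)
  then obtain l s where "l \<in> set (lvs t)" "w = l @ s" using word_cases by blast
  then obtain i where "i < length (lvs t)" "w = lvs t ! i @ s" by (metis in_set_conv_nth)
  then show ?thesis using word w False by blast
qed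

lemma rep_unfold: "thompson_rep v (wds tL) (wds tR) c \<longleftrightarrow>
   length (lvs tR) = length (lvs tL) \<and>
   (\<forall>i<length (lvs tL). \<forall>w. v (conc (lvs tL ! i) w) = conc (lvs tR ! ((i + c) mod length (lvs tL))) w)"
  unfolding thompson_rep_def enum_lvs Let_def using is_tree_wds by blast

lemma IND: assumes "thompson_rep v (wds tL) (wds tR) c"
  shows "v (Aseq z) = Aseq (iota_data (wds tL) (wds tR) c z)"
proof -
  let ?k = "length (lvs tL)"
  have kR: "length (lvs tR) = ?k" and vv: "\<And>i w. i < ?k \<Longrightarrow> v (conc (lvs tL ! i) w) = conc (lvs tR ! ((i + c) mod ?k)) w"
    using assms by (auto simp: rep_unfold)
  have kpos: "?k > 0" using lvs_ne[of tL] by simp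
  show ?thesis
  proof (cases z rule: Z_cases[of tL])
    case (node i)
    have "v (Aseq z) = v (conc (lvs tL ! ((i + 1) mod ?k)) (\<lambda>_. False))"
      using A_zs[OF node(1)] node(2) by simp
    also have "\<dots> = conc (lvs tR ! (((i + 1) mod ?k + c) mod ?k)) (\<lambda>_. False)"
      using vv kpos by simp
    also have "((i + 1) mod ?k + c) mod ?k = ((i + c) mod ?k + 1) mod ?k"
      by (simp add: mod_simps)
    also have "conc (lvs tR ! (((i + c) mod ?k + 1) mod ?k)) (\<lambda>_. False) = Aseq (zs tR ! ((i + c) mod ?k))"
      using A_zs[of "(i + c) mod ?k" tR] kR kpos by simp
    finally show ?thesis using ID_node[OF node(1)] node(2) by simp
  next
    case (word i s)
    have "v (Aseq z) = v (conc (lvs tL ! i) (conc (s @ [True]) (\<lambda>_. False)))"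
      using word by (simp add: conc_append)
    also have "\<dots> = conc (lvs tR ! ((i + c) mod ?k)) (conc (s @ [True]) (\<lambda>_. False))"
      using vv word(1) by simp
    finally show ?thesis using ID_word[OF word(1)] word by (simp add: conc_append)
  qed
qed

lemma iota_eq: assumes "thompson_rep v L R c" shows "iota v = iota_data L R c"
proof -
  obtain tL tR where L: "L = wds tL" and R: "R = wds tR"
    using assms tree_exists unfolding thompson_rep_def by metis
  have ex: "\<exists>g. \<exists>L R c. thompson_rep v L R c \<and> g = iota_data L R c" using assms by blast
  obtain L' R' c' where r': "thompson_rep v L' R' c'" and g: "iota v = iota_data L' R' c'"
    using someI_ex[OF ex] unfolding iota_def by blast
  obtain tL' tR' where L': "L' = wds tL'" and R': "R' = wds tR'"
    using r' tree_exists unfolding thompson_rep_def by metis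
  show ?thesis
  proof (rule ext)
    fix z
    have "Aseq (iota_data L' R' c' z) = v (Aseq z)" using IND r' L' R' by metis
    also have "\<dots> = Aseq (iota_data L R c z)" using IND assms L R by metis
    finally show "iota v z = iota_data L R c z" using g Aseq_inj by metis
  qed
qed



fun lo :: "bool list \<Rightarrow> real" where
  "lo [] = 0"
| "lo (b#x) = (if b then 1/2 else 0) + lo x / 2"

definition wid :: "bool list \<Rightarrow> real" where "wid x = (1/2) ^ length x"
definition hi :: "bool list \<Rightarrow> real" where "hi x = lo x + wid x"

fun zv :: "zel \<Rightarrow> real" where
  "zv (W x) = wv x"
| "zv Zeta = 1"

lemma wid_pos: "wid x > 0" by (simp add: wid_def)
lemma wid_Cons[simp]: "wid (b # x) = wid x / 2" by (simp add: wid_def)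
lemma wid_Nil[simp]: "wid [] = 1" by (simp add: wid_def)
lemma wid_append: "wid (l @ s) = wid l * wid s" by (simp add: wid_def power_add)

lemma wv_lo: "wv x = lo x + wid x / 2" by (induction x) auto

lemma wv_append: "wv (l @ s) = lo l + wv s * wid l"
  by (induction l) (auto simp: field_simps)

lemma lo_append: "lo (l @ s) = lo l + lo s * wid l"
  by (induction l) (auto simp: field_simps)

lemma lo_rep_F: "lo (replicate m False) = 0" by (induction m) auto
lemma lo_rep_T: "lo (replicate m True) = 1 - (1/2)^m" by (induction m) (auto simp: field_simps)

lemma lo_T_rep: "lo (x @ True # replicate m False) = wv x"
  by (simp add: lo_append lo_rep_F wv_lo)

lemma hi_F_rep: "hi (x @ False # replicate m True) = wv x"
  by (simp add: hi_def lo_append lo_rep_T wv_lo wid_append wid_def field_simps power_add)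

lemma zv_le1: "zv z \<le> 1" using wv_bounds by (cases z) (auto simp: less_imp_le)

lemma zlt_zv: "zlt z z' \<longleftrightarrow> zv z < zv z'"
  using wv_bounds zv_le1[of z'] by (cases z; cases z') (auto simp: wlt_iff)

lemma zv_inj: "zv z = zv z' \<Longrightarrow> z = z'"
  using wv_bounds wv_inj by (cases z; cases z') (auto, (metis less_irrefl)+)

lemma T_a: "lo (lvs t ! 0) = 0"
  using S1[of t] lo_rep_F by metis

lemma hi_last: "hi (lvs t ! (length (lvs t) - 1)) = 1"
proof -
  obtain m where "lvs t ! (length (lvs t) - 1) = replicate m True" using S2 by blast
  then show ?thesis by (simp add: hi_def lo_rep_T wid_def)
qed

lemma T_b: "Suc i < length (lvs t) \<Longrightarrow> lo (lvs t ! Suc i) = hi (lvs t ! i)"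
proof -
  assume a: "Suc i < length (lvs t)"
  then have i: "i < length (nds t)" using len_nds[of t] by simp
  obtain m where m: "lvs t ! Suc i = nds t ! i @ True # replicate m False" using S3[OF i] by blast
  obtain m' where m': "lvs t ! i = nds t ! i @ False # replicate m' True" using S4[OF i] by blast
  show ?thesis using m m' lo_T_rep hi_F_rep by simp
qed

lemma T_c: "i < length (lvs t) \<Longrightarrow> zv (zs t ! i) = hi (lvs t ! i)"
proof -
  assume a: "i < length (lvs t)"
  show ?thesis
  proof (cases "i < length (nds t)")
    case True
    obtain m' where m': "lvs t ! i = nds t ! i @ False # replicate m' True" using S4[OF True] by blast
    then show ?thesis using True hi_F_rep by (simp add: zs_def nth_append)
  next
    case False
    then have "i = length (lvs t) - 1" using a len_nds[of t] by simp
    then show ?thesis using hi_last[of t] zs_last[of t] by simp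
  qed
qed

lemma lo_hi: "lo x < hi x" using wid_pos by (simp add: hi_def)

lemma hi_lo_mono: "i < j \<Longrightarrow> j < length (lvs t) \<Longrightarrow> hi (lvs t ! i) \<le> lo (lvs t ! j)"
proof (induction j)
  case 0 then show ?case by simp
next
  case (Suc j)
  show ?case
  proof (cases "i = j")
    case True then show ?thesis using T_b Suc by simp
  next
    case False
    then have "hi (lvs t ! i) \<le> lo (lvs t ! j)" using Suc by simp
    also have "\<dots> \<le> hi (lvs t ! j)" using lo_hi less_imp_le by blast
    also have "\<dots> = lo (lvs t ! Suc j)" using T_b Suc by simp
    finally show ?thesis .
  qed
qed

lemma hi_mono: "i \<le> j \<Longrightarrow> j < length (lvs t) \<Longrightarrow> hi (lvs t ! i) \<le> hi (lvs t ! j)"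
  using hi_lo_mono[of i j t] lo_hi[of "lvs t ! j"] by (cases "i = j") auto

lemma AFF: assumes kR: "length (lvs tR) = length (lvs tL)"
  shows "\<exists>i < length (lvs tL). lo (lvs tL ! i) < zv z \<and> zv z \<le> hi (lvs tL ! i) \<and>
     zv (iota_data (wds tL) (wds tR) c z) =
       lo (lvs tR ! ((i + c) mod length (lvs tL))) + (zv z - lo (lvs tL ! i)) *
         (wid (lvs tR ! ((i + c) mod length (lvs tL))) / wid (lvs tL ! i))"
proof -
  let ?k = "length (lvs tL)"
  have kpos: "?k > 0" using lvs_ne[of tL] by simp
  show ?thesis
  proof (cases z rule: Z_cases[of tL])
    case (node i)
    let ?j = "(i + c) mod ?k"
    have j: "?j < length (lvs tR)" using kR kpos by simp
    have z: "zv z = hi (lvs tL ! i)" using T_c[OF node(1)] node(2) by simp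
    have gz: "zv (iota_data (wds tL) (wds tR) c z) = hi (lvs tR ! ?j)"
      using ID_node[OF node(1)] node(2) T_c[OF j] by simp
    show ?thesis
      using node(1) z gz lo_hi[of "lvs tL ! i"] wid_pos[of "lvs tL ! i"]
      by (intro exI[of _ i]) (simp add: hi_def field_simps)
  next
    case (word i s)
    let ?j = "(i + c) mod ?k"
    have z: "zv z = lo (lvs tL ! i) + wv s * wid (lvs tL ! i)" using word(2) by (simp add: wv_append)
    have gz: "zv (iota_data (wds tL) (wds tR) c z) = lo (lvs tR ! ?j) + wv s * wid (lvs tR ! ?j)"
      using ID_word[OF word(1)] word by (simp add: wv_append)
    have b: "0 < wv s" "wv s < 1" using wv_bounds by auto
    have w: "wid (lvs tL ! i) > 0" by (rule wid_pos)
    have "lo (lvs tL ! i) < zv z" using z b w by simp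
    moreover have "zv z \<le> hi (lvs tL ! i)" using z b w by (simp add: hi_def)
    moreover have "zv (iota_data (wds tL) (wds tR) c z) =
       lo (lvs tR ! ?j) + (zv z - lo (lvs tL ! i)) * (wid (lvs tR ! ?j) / wid (lvs tL ! i))"
      using z gz w by (simp add: field_simps)
    ultimately show ?thesis using word(1) by blast
  qed
qed



lemma cyc_preserve:
  fixes g :: "zel \<Rightarrow> zel" and \<tau> :: real
  assumes H1: "\<And>z z'. zv z < zv z' \<Longrightarrow> zv z' \<le> \<tau> \<Longrightarrow> zv (g z) < zv (g z')"
    and H2: "\<And>z z'. zv z < zv z' \<Longrightarrow> \<tau> < zv z \<Longrightarrow> zv (g z) < zv (g z')"
    and H3: "\<And>z z'. zv z \<le> \<tau> \<Longrightarrow> \<tau> < zv z' \<Longrightarrow> zv (g z') < zv (g z)"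
    and xs: "xs \<in> Lambda n"
  shows "map g xs \<in> Lambda n"
proof -
  have inj: "inj g"
  proof (rule injI)
    fix z z' assume e: "g z = g z'"
    show "z = z'"
    proof (rule ccontr)
      assume "z \<noteq> z'"
      then have "zv z \<noteq> zv z'" using zv_inj by blast
      then consider "zv z < zv z'" | "zv z' < zv z" by linarith
      then show False
      proof cases
        case 1 then show ?thesis using e H1[OF 1] H2[OF 1] H3[of z z'] by (cases "zv z' \<le> \<tau>"; cases "\<tau> < zv z") auto
      next
        case 2 then show ?thesis using e H1[OF 2] H2[OF 2] H3[of z' z] by (cases "zv z \<le> \<tau>"; cases "\<tau> < zv z'") auto
      qed
    qed
  qed
  from xs obtain k where len: "length xs = n" and dis: "distinct xs" and srt: "sorted_wrt zlt (rotate k xs)"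
    unfolding Lambda_def by blast
  define ys where "ys = rotate k xs"
  define P where "P = (\<lambda>z. zv z \<le> \<tau>)"
  define ds where "ds = takeWhile P ys"
  define us where "us = dropWhile P ys"
  have ys: "ys = ds @ us" by (simp add: ds_def us_def)
  have sy: "sorted_wrt (\<lambda>a b. zv a < zv b) ys" using srt unfolding ys_def zlt_zv .
  have dP: "\<forall>d\<in>set ds. zv d \<le> \<tau>" unfolding ds_def P_def by (auto dest: set_takeWhileD)
  have uP: "\<forall>u\<in>set us. \<tau> < zv u"
  proof (cases us)
    case Nil then show ?thesis by simp
  next
    case (Cons u0 us')
    have "\<not> P u0" using Cons unfolding us_def by (metis hd_dropWhile list.distinct(1) list.sel(1))
    moreover have "\<forall>u\<in>set us'. zv u0 < zv u" using sy ys Cons by (simp add: sorted_wrt_append)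
    ultimately show ?thesis using Cons unfolding P_def by force
  qed
  have sd: "sorted_wrt (\<lambda>a b. zv a < zv b) ds" and su: "sorted_wrt (\<lambda>a b. zv a < zv b) us"
    using sy ys by (auto simp: sorted_wrt_append)
  have "sorted_wrt (\<lambda>a b. zv a < zv b) (map g us @ map g ds)"
    unfolding sorted_wrt_append sorted_wrt_map
  proof (intro conjI ballI)
    show "sorted_wrt (\<lambda>x y. zv (g x) < zv (g y)) us"
      using su by (rule sorted_wrt_mono_rel[rotated]) (use uP H2 in blast)
    show "sorted_wrt (\<lambda>x y. zv (g x) < zv (g y)) ds"
      using sd by (rule sorted_wrt_mono_rel[rotated]) (use dP H1 in blast)
    fix x y assume "x \<in> set (map g us)" "y \<in> set (map g ds)"
    then show "zv x < zv y" using uP dP H3 by auto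
  qed
  moreover have "rotate (length ds) (map g ys) = map g us @ map g ds"
    using ys rotate_append[of "map g ds" "map g us"] by simp
  moreover have "map g ys = rotate k (map g xs)" by (simp add: ys_def rotate_map)
  ultimately have "sorted_wrt zlt (rotate (length ds + k) (map g xs))"
    by (simp add: rotate_rotate zlt_zv[abs_def])
  then show ?thesis unfolding Lambda_def using len dis inj by (auto simp: distinct_map inj_on_def)
qed



lemma jf_lo: "i + c mod k < k \<Longrightarrow> (i + c) mod k = i + c mod (k::nat)"
proof -
  assume a: "i + c mod k < k"
  have "(i + c) mod k = (i + c mod k) mod k" by (simp add: mod_add_right_eq)
  also have "\<dots> = i + c mod k" using a by simp
  finally show ?thesis .
qed

lemma jf_hi: "k \<le> i + c mod k \<Longrightarrow> i < k \<Longrightarrow> (i + c) mod (k::nat) = i + c mod k - k"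
proof -
  assume a: "k \<le> i + c mod k" "i < k"
  have cm: "c mod k < k" using a by auto
  have "(i + c) mod k = (i + c mod k) mod k" by (simp add: mod_add_right_eq)
  also have "\<dots> = (i + c mod k - k) mod k" using a(1) by (simp add: le_mod_geq)
  also have "\<dots> = i + c mod k - k" using a cm by (intro mod_less) linarith
  finally show ?thesis .
qed

lemma part1_data:
  assumes kR: "length (lvs tR) = length (lvs tL)" and xs: "xs \<in> Lambda n"
  shows "map (iota_data (wds tL) (wds tR) c) xs \<in> Lambda n"
proof -
  let ?g = "iota_data (wds tL) (wds tR) c"
  let ?k = "length (lvs tL)"
  define l where "l = (\<lambda>i. lvs tL ! i)"
  define r where "r = (\<lambda>i. lvs tR ! i)"
  define jf where "jf = (\<lambda>i. (i + c) mod ?k)"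
  have kpos: "?k > 0" using lvs_ne[of tL] by simp
  have "\<forall>z. \<exists>i < ?k. lo (l i) < zv z \<and> zv z \<le> hi (l i) \<and>
     zv (?g z) = lo (r (jf i)) + (zv z - lo (l i)) * (wid (r (jf i)) / wid (l i))"
    using AFF[OF kR] unfolding l_def r_def jf_def by blast
  then obtain bl where bl: "\<And>z. bl z < ?k" "\<And>z. lo (l (bl z)) < zv z" "\<And>z. zv z \<le> hi (l (bl z))"
    and aff: "\<And>z. zv (?g z) = lo (r (jf (bl z))) + (zv z - lo (l (bl z))) * (wid (r (jf (bl z))) / wid (l (bl z)))"
    by metis
  have jk: "jf i < ?k" for i using kpos by (simp add: jf_def)
  have gb: "lo (r (jf (bl z))) < zv (?g z) \<and> zv (?g z) \<le> hi (r (jf (bl z)))" for z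
  proof -
    have p: "0 < zv z - lo (l (bl z))" "zv z - lo (l (bl z)) \<le> wid (l (bl z))"
      using bl(2,3)[of z] by (auto simp: hi_def)
    have w: "wid (l (bl z)) > 0" "wid (r (jf (bl z))) > 0" using wid_pos by auto
    have "(zv z - lo (l (bl z))) * (wid (r (jf (bl z))) / wid (l (bl z))) > 0"
      using p w by simp
    moreover have "(zv z - lo (l (bl z))) * (wid (r (jf (bl z))) / wid (l (bl z))) \<le> wid (r (jf (bl z)))"
    proof -
      have "(zv z - lo (l (bl z))) * (wid (r (jf (bl z))) / wid (l (bl z))) \<le>
            wid (l (bl z)) * (wid (r (jf (bl z))) / wid (l (bl z)))"
        using p w by (intro mult_right_mono) auto
      also have "\<dots> = wid (r (jf (bl z)))" using w by simp
      finally show ?thesis .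
    qed
    ultimately show ?thesis using aff[of z] by (simp add: hi_def)
  qed
  have O1: "bl z \<le> bl z'" if "zv z < zv z'" for z z'
  proof (rule ccontr)
    assume "\<not> bl z \<le> bl z'"
    then have "hi (l (bl z')) \<le> lo (l (bl z))" using hi_lo_mono[of "bl z'" "bl z" tL] bl(1) by (simp add: l_def)
    then show False using bl(2)[of z] bl(3)[of z'] that by linarith
  qed
  have gsame: "zv (?g z) < zv (?g z')" if "zv z < zv z'" "bl z = bl z'" for z z'
  proof -
    have w: "wid (l (bl z)) > 0" "wid (r (jf (bl z))) > 0" using wid_pos by auto
    then have "(zv z - lo (l (bl z))) * (wid (r (jf (bl z))) / wid (l (bl z))) <
               (zv z' - lo (l (bl z))) * (wid (r (jf (bl z))) / wid (l (bl z)))"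
      using that by (intro mult_strict_right_mono) auto
    then show ?thesis using aff[of z] aff[of z'] that(2) by simp
  qed
  have gdiff: "zv (?g z) < zv (?g z')" if "jf (bl z) < jf (bl z')" for z z'
  proof -
    have "hi (r (jf (bl z))) \<le> lo (r (jf (bl z')))"
      using hi_lo_mono[of "jf (bl z)" "jf (bl z')" tR] that jk kR by (simp add: r_def)
    then show ?thesis using gb[of z] gb[of z'] by linarith
  qed
  define K0 where "K0 = ?k - 1 - c mod ?k"
  have cm: "c mod ?k < ?k" using kpos by simp
  define \<tau> where "\<tau> = hi (l K0)"
  have K0k: "K0 < ?k" using kpos unfolding K0_def by linarith
  have thr: "zv z \<le> \<tau> \<longleftrightarrow> bl z \<le> K0" for z
  proof
    assume "zv z \<le> \<tau>"
    show "bl z \<le> K0"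
    proof (rule ccontr)
      assume "\<not> bl z \<le> K0"
      then have "hi (l K0) \<le> lo (l (bl z))" using hi_lo_mono[of K0 "bl z" tL] bl(1) by (simp add: l_def)
      then show False using bl(2)[of z] \<open>zv z \<le> \<tau>\<close> \<tau>_def by linarith
    qed
  next
    assume "bl z \<le> K0"
    then have "hi (l (bl z)) \<le> hi (l K0)" using hi_mono[of "bl z" K0 tL] K0k by (simp add: l_def)
    then show "zv z \<le> \<tau>" using bl(3)[of z] \<tau>_def by linarith
  qed
  have jlo: "jf i = i + c mod ?k" if "i \<le> K0" for i
    unfolding jf_def using that K0_def cm by (intro jf_lo) linarith
  have jhi: "jf i = i + c mod ?k - ?k" if "K0 < i" "i < ?k" for i
    unfolding jf_def using that K0_def cm by (intro jf_hi) linarith+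
  show ?thesis
  proof (rule cyc_preserve[where \<tau> = \<tau>])
    fix z z' assume a: "zv z < zv z'" "zv z' \<le> \<tau>"
    have "bl z \<le> bl z'" "bl z' \<le> K0" using O1[OF a(1)] thr a(2) by auto
    then show "zv (?g z) < zv (?g z')"
    proof (cases "bl z = bl z'")
      case True then show ?thesis using gsame a by blast
    next
      case False
      then have "jf (bl z) < jf (bl z')" using jlo \<open>bl z \<le> bl z'\<close> \<open>bl z' \<le> K0\<close> by simp
      then show ?thesis by (rule gdiff)
    qed
  next
    fix z z' assume a: "zv z < zv z'" "\<tau> < zv z"
    have "bl z \<le> bl z'" "K0 < bl z" using O1[OF a(1)] thr a(2) by (auto simp: not_le[symmetric])
    then show "zv (?g z) < zv (?g z')"
    proof (cases "bl z = bl z'")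
      case True then show ?thesis using gsame a by blast
    next
      case False
      have "K0 < bl z'" using \<open>bl z \<le> bl z'\<close> \<open>K0 < bl z\<close> by simp
      then have "jf (bl z) < jf (bl z')" using jhi[of "bl z"] jhi[of "bl z'"] bl(1) False
        \<open>bl z \<le> bl z'\<close> \<open>K0 < bl z\<close> K0_def cm by simp
      then show ?thesis by (rule gdiff)
    qed
  next
    fix z z' assume a: "zv z \<le> \<tau>" "\<tau> < zv z'"
    have "bl z \<le> K0" "K0 < bl z'" using thr a by (auto simp: not_le[symmetric])
    then have "jf (bl z') < jf (bl z)" using jhi[of "bl z'"] jlo[of "bl z"] bl(1)[of z'] K0_def cm by simp
    then show "zv (?g z') < zv (?g z)" by (rule gdiff)
  qed (rule xs)
qed

lemma part1: assumes "t \<in> ThompsonT" "xs \<in> Lambda n" shows "map (iota t) xs \<in> Lambda n"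
proof -
  obtain L R c where rep: "thompson_rep t L R c" using assms(1) unfolding ThompsonT_def by blast
  obtain tL tR where L: "L = wds tL" and R: "R = wds tR"
    using rep tree_exists unfolding thompson_rep_def by metis
  have kR: "length (lvs tR) = length (lvs tL)" using rep L R by (simp add: rep_unfold)
  show ?thesis using iota_eq[OF rep] L R part1_data[OF kR assms(2)] by simp
qed



definition sh :: "nat \<Rightarrow> nat \<Rightarrow> nat" where "sh i p = (if i \<le> p then Suc p else p)"

lemma zs_ex_sh: assumes "i < length (lvs t)" "p < length (lvs t)"
  shows "zs (ex t i) ! (sh i p) = zs t ! p"
proof -
  have L: "length (zs t) = length (lvs t)" by (rule length_zs)
  show ?thesis
  proof (cases "i \<le> p")
    case True
    then show ?thesis using assms L by (simp add: zs_ex sh_def nth_append min_def)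
  next
    case False
    then show ?thesis using assms L by (simp add: zs_ex sh_def nth_append min_def)
  qed
qed

definition ok :: "tr \<Rightarrow> nat list \<Rightarrow> nat list \<Rightarrow> nat \<Rightarrow> bool" where
  "ok t ps ps' k' \<longleftrightarrow> ps \<noteq> [] \<and> length ps' = length ps \<and> sorted_wrt (<) ps \<and>
     (\<forall>p\<in>set ps. p < length (lvs t)) \<and> sorted_wrt (<) ps' \<and> ps' ! (length ps - 1) < k' \<and>
     ps ! 0 \<le> ps' ! 0 \<and> (\<forall>j. 0 < j \<and> j < length ps \<longrightarrow> ps ! j - ps ! (j - 1) \<le> ps' ! j - ps' ! (j - 1)) \<and>
     length (lvs t) - ps ! (length ps - 1) \<le> k' - ps' ! (length ps - 1) \<and>
     (ps ! (length ps - 1) = length (lvs t) - 1 \<longrightarrow> ps' ! (length ps - 1) = k' - 1)"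

lemma ok_mono:
  assumes "ok t ps ps' k'" "j \<le> m" "m < length ps"
  shows "ps ! m + ps' ! j \<le> ps' ! m + ps ! j"
  using assms(2,3)
proof (induction m)
  case 0 then show ?case by simp
next
  case (Suc m)
  show ?case
  proof (cases "j = Suc m")
    case True then show ?thesis by simp
  next
    case False
    then have ih: "ps ! m + ps' ! j \<le> ps' ! m + ps ! j" using Suc by simp
    have s1: "ps ! m < ps ! Suc m" using assms(1) Suc.prems unfolding ok_def by (simp add: sorted_wrt_iff_nth_less)
    have s2: "ps' ! m < ps' ! Suc m" using assms(1) Suc.prems unfolding ok_def by (simp add: sorted_wrt_iff_nth_less)
    have "ps ! Suc m - ps ! m \<le> ps' ! Suc m - ps' ! m" using assms(1) Suc.prems unfolding ok_def by auto
    then show ?thesis using ih s1 s2 by linarith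
  qed
qed

lemma ok_K: assumes "ok t ps ps' k'"
  shows "length (lvs t) + (ps' ! (length ps - 1) - ps ! (length ps - 1)) \<le> k'"
    "ps ! (length ps - 1) \<le> ps' ! (length ps - 1)"
proof -
  let ?n = "length ps"
  have ne: "?n > 0" using assms unfolding ok_def by simp
  have m: "ps ! (?n - 1) + ps' ! 0 \<le> ps' ! (?n - 1) + ps ! 0" using ok_mono[OF assms, of 0 "?n - 1"] ne by simp
  have a: "ps ! 0 \<le> ps' ! 0" using assms unfolding ok_def by simp
  have b: "ps ! (?n - 1) < length (lvs t)" using assms ne unfolding ok_def by simp
  have c: "length (lvs t) - ps ! (?n - 1) \<le> k' - ps' ! (?n - 1)" using assms unfolding ok_def by simp
  show "ps ! (?n - 1) \<le> ps' ! (?n - 1)" using m a by linarith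
  then show "length (lvs t) + (ps' ! (?n - 1) - ps ! (?n - 1)) \<le> k'" using b c by linarith
qed

lemma sorted_sh: "sorted_wrt (<) ps \<Longrightarrow> sorted_wrt (<) (map (sh i) ps)"
  by (induction ps) (auto simp: sh_def)

lemma PT_aux:
  "\<forall>t ps. ok t ps ps' k' \<and> k' - length (lvs t) = d \<longrightarrow>
     (\<exists>t'. length (lvs t') = k' \<and> (\<forall>j<length ps. zs t' ! (ps' ! j) = zs t ! (ps ! j)))"
proof (induction d rule: less_induct)
  case (less d)
  show ?case
  proof (intro allI impI)
    fix t ps assume h: "ok t ps ps' k' \<and> k' - length (lvs t) = d"
    let ?n = "length ps"
    let ?K = "length (lvs t)"
    have okt: "ok t ps ps' k'" using h by simp
    have ne: "?n > 0" and lp: "length ps' = ?n" and sp: "sorted_wrt (<) ps" and bd: "\<forall>p\<in>set ps. p < ?K"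
      and sp': "sorted_wrt (<) ps'" and lt: "ps' ! (?n - 1) < k'" and f0: "ps ! 0 \<le> ps' ! 0"
      and df: "\<And>j. 0 < j \<Longrightarrow> j < ?n \<Longrightarrow> ps ! j - ps ! (j - 1) \<le> ps' ! j - ps' ! (j - 1)"
      and tl: "?K - ps ! (?n - 1) \<le> k' - ps' ! (?n - 1)"
      and lc: "ps ! (?n - 1) = ?K - 1 \<longrightarrow> ps' ! (?n - 1) = k' - 1"
      using okt unfolding ok_def by auto
    have sps: "\<And>a b. a < b \<Longrightarrow> b < ?n \<Longrightarrow> ps ! a < ps ! b" using sp by (simp add: sorted_wrt_iff_nth_less)
    have sps': "\<And>a b. a < b \<Longrightarrow> b < ?n \<Longrightarrow> ps' ! a < ps' ! b" using sp' lp by (simp add: sorted_wrt_iff_nth_less)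
    have bdn: "\<And>m. m < ?n \<Longrightarrow> ps ! m < ?K" using bd by auto
    have Kk: "?K + (ps' ! (?n - 1) - ps ! (?n - 1)) \<le> k'" and le_last: "ps ! (?n - 1) \<le> ps' ! (?n - 1)"
      using ok_K[OF okt] by auto
    have Kpos: "?K > 0" using lvs_ne[of t] by simp
    have stepI: "\<exists>t'. length (lvs t') = k' \<and> (\<forall>j<?n. zs t' ! (ps' ! j) = zs t ! (ps ! j))"
      if i: "i < ?K" and Kl: "?K < k'" and ok1: "ok (ex t i) (map (sh i) ps) ps' k'" for i
    proof -
      have len1: "length (lvs (ex t i)) = Suc ?K" using ex_lvs_len[OF i] .
      have dd: "k' - ?K = d" using h by simp
      have "k' - length (lvs (ex t i)) < d" using dd Kl len1 by linarith
      then obtain t' where t': "length (lvs t') = k'"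
        "\<forall>j<length (map (sh i) ps). zs t' ! (ps' ! j) = zs (ex t i) ! (map (sh i) ps ! j)"
        using less.IH ok1 len1 by blast
      have "zs t' ! (ps' ! j) = zs t ! (ps ! j)" if "j < ?n" for j
        using t'(2) that zs_ex_sh[OF i bdn[OF that]] by simp
      then show ?thesis using t'(1) by blast
    qed
    consider (a) "ps ! 0 < ps' ! 0"
      | (b) j0 where "ps ! 0 = ps' ! 0" "0 < j0" "j0 < ?n" "ps ! j0 - ps ! (j0 - 1) < ps' ! j0 - ps' ! (j0 - 1)"
      | (c) "ps ! 0 = ps' ! 0" "\<forall>j. 0 < j \<and> j < ?n \<longrightarrow> ps ! j - ps ! (j - 1) = ps' ! j - ps' ! (j - 1)"
      using f0 df by (metis le_neq_implies_less)
    then show "\<exists>t'. length (lvs t') = k' \<and> (\<forall>j<?n. zs t' ! (ps' ! j) = zs t ! (ps ! j))"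
    proof cases
      case a
      have m0: "ps ! (?n - 1) + ps' ! 0 \<le> ps' ! (?n - 1) + ps ! 0" using ok_mono[OF okt, of 0 "?n - 1"] ne by simp
      have Kl: "?K < k'" using Kk m0 a bdn[of "?n - 1"] ne by linarith
      have shs: "\<And>m. m < ?n \<Longrightarrow> sh 0 (ps ! m) = Suc (ps ! m)" by (simp add: sh_def)
      have ok1: "ok (ex t 0) (map (sh 0) ps) ps' k'"
        unfolding ok_def using ne lp sp sp' lt a df tl lc bdn Kpos
        by (auto simp: ex_lvs_len shs sorted_sh in_set_conv_nth)
      show ?thesis by (rule stepI[OF Kpos Kl ok1])
    next
      case (b j0)
      let ?i = "ps ! j0"
      have iK: "?i < ?K" using bdn b(3) .
      have shl: "sh ?i (ps ! m) = ps ! m" if "m < j0" for m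
      proof -
        have "ps ! m < ps ! j0" using sps[of m j0] b(3) that by blast
        then show ?thesis by (simp add: sh_def)
      qed
      have shg: "sh ?i (ps ! m) = Suc (ps ! m)" if "j0 \<le> m" "m < ?n" for m
      proof -
        have "ps ! j0 \<le> ps ! m" using sps[of j0 m] that by (cases "j0 = m") auto
        then show ?thesis by (simp add: sh_def)
      qed
      have m1: "ps ! (j0 - 1) + ps' ! 0 \<le> ps' ! (j0 - 1) + ps ! 0" using ok_mono[OF okt, of 0 "j0 - 1"] b by simp
      have m2: "ps ! (?n - 1) + ps' ! j0 \<le> ps' ! (?n - 1) + ps ! j0" using ok_mono[OF okt, of j0 "?n - 1"] b by simp
      have s1: "ps ! (j0 - 1) < ps ! j0" "ps' ! (j0 - 1) < ps' ! j0" using sps sps' b by auto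
      have "ps ! j0 < ps' ! j0" using b(1,4) m1 s1 by linarith
      then have Kl: "?K < k'" using Kk m2 bdn[of "?n - 1"] ne by linarith
      have ok1: "ok (ex t ?i) (map (sh ?i) ps) ps' k'"
        unfolding ok_def
      proof (intro conjI allI impI ballI)
        show "map (sh ?i) ps \<noteq> []" "length ps' = length (map (sh ?i) ps)" using ne lp by auto
        show "sorted_wrt (<) (map (sh ?i) ps)" using sp by (rule sorted_sh)
        show "sorted_wrt (<) ps'" by (rule sp')
        show "ps' ! (length (map (sh ?i) ps) - 1) < k'" using lt by simp
        show "map (sh ?i) ps ! 0 \<le> ps' ! 0" using shl[of 0] b ne by simp
        fix p assume "p \<in> set (map (sh ?i) ps)"
        then obtain m where "m < ?n" "p = sh ?i (ps ! m)" by (auto simp: in_set_conv_nth)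
        then show "p < length (lvs (ex t ?i))" using bdn[of m] ex_lvs_len[OF iK] by (auto simp: sh_def)
      next
        fix j assume j: "0 < j \<and> j < length (map (sh ?i) ps)"
        show "map (sh ?i) ps ! j - map (sh ?i) ps ! (j - 1) \<le> ps' ! j - ps' ! (j - 1)"
        proof -
          have e1: "map (sh ?i) ps ! j = sh ?i (ps ! j)" and e2: "map (sh ?i) ps ! (j - 1) = sh ?i (ps ! (j - 1))"
            using j by auto
          note e = e1 e2
          consider "j < j0" | "j = j0" | "j0 < j" by linarith
          then show ?thesis
          proof cases
            case 1 then show ?thesis unfolding e using j shl[of j] shl[of "j - 1"] df[of j] by simp
          next
            case 2
            have "Suc (ps ! j0) - ps ! (j0 - 1) = Suc (ps ! j0 - ps ! (j0 - 1))" using s1 by simp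
            then show ?thesis unfolding e using 2 j shl[of "j - 1"] shg[of j] b(4) by simp
          next
            case 3 then show ?thesis unfolding e using j shg[of j] shg[of "j - 1"] df[of j] by simp
          qed
        qed
      next
        show "length (lvs (ex t ?i)) - map (sh ?i) ps ! (length (map (sh ?i) ps) - 1)
              \<le> k' - ps' ! (length (map (sh ?i) ps) - 1)"
          using shg[of "?n - 1"] b tl ex_lvs_len[OF iK] bdn[of "?n - 1"] by simp
      next
        assume "map (sh ?i) ps ! (length (map (sh ?i) ps) - 1) = length (lvs (ex t ?i)) - 1"
        then show "ps' ! (length (map (sh ?i) ps) - 1) = k' - 1"
          using shg[of "?n - 1"] b lc ex_lvs_len[OF iK] by simp
      qed
      show ?thesis by (rule stepI[OF iK Kl ok1])
    next
      case c
      have eq: "ps' ! j = ps ! j" if "j < ?n" for j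
        using that
      proof (induction j)
        case 0 then show ?case using c by simp
      next
        case (Suc j)
        have "ps ! Suc j - ps ! (Suc j - 1) = ps' ! Suc j - ps' ! (Suc j - 1)"
          using c(2) Suc.prems by blast
        moreover have "ps ! j < ps ! Suc j" "ps' ! j < ps' ! Suc j" using sps sps' Suc.prems by auto
        ultimately show ?case using Suc by simp
      qed
      show ?thesis
      proof (cases "?K = k'")
        case True then show ?thesis using eq by (intro exI[of _ t]) simp
      next
        case False
        have lastn: "?n - 1 < ?n" using ne by simp
        have Kl: "?K < k'" using Kk False by linarith
        have nl: "ps ! (?n - 1) \<noteq> ?K - 1"
        proof
          assume "ps ! (?n - 1) = ?K - 1"
          then have "ps' ! (?n - 1) = k' - 1" using lc by simp
          then show False using eq[OF lastn] \<open>ps ! (?n - 1) = ?K - 1\<close> Kl Kpos by linarith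
        qed
        let ?i = "Suc (ps ! (?n - 1))"
        have iK: "?i < ?K" using nl bdn[OF lastn] by linarith
        have shi: "sh ?i (ps ! m) = ps ! m" if "m < ?n" for m
        proof -
          have "ps ! m \<le> ps ! (?n - 1)"
          proof (cases "m = ?n - 1")
            case False
            then have "m < ?n - 1" using that by linarith
            then show ?thesis using sps[of m "?n - 1"] lastn by simp
          qed simp
          then show ?thesis by (simp add: sh_def)
        qed
        have mp: "map (sh ?i) ps = ps" by (rule map_idI) (metis in_set_conv_nth shi)
        have L1: "length (lvs (ex t ?i)) = Suc ?K" by (rule ex_lvs_len[OF iK])
        have ok1: "ok (ex t ?i) (map (sh ?i) ps) ps' k'"
          unfolding mp ok_def L1
        proof (intro conjI allI impI ballI)
          show "ps \<noteq> []" "length ps' = ?n" "sorted_wrt (<) ps" "sorted_wrt (<) ps'" "ps' ! (?n - 1) < k'"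
            "ps ! 0 \<le> ps' ! 0" using ne lp sp sp' lt f0 by auto
          fix p assume "p \<in> set ps" then show "p < Suc ?K" using bd by auto
        next
          fix j assume "0 < j \<and> j < ?n" then show "ps ! j - ps ! (j - 1) \<le> ps' ! j - ps' ! (j - 1)" using df by blast
        next
          show "Suc ?K - ps ! (?n - 1) \<le> k' - ps' ! (?n - 1)" using eq[OF lastn] Kl bdn[OF lastn] by linarith
        next
          assume "ps ! (?n - 1) = Suc ?K - 1" then show "ps' ! (?n - 1) = k' - 1" using bdn[OF lastn] by simp
        qed
        show ?thesis by (rule stepI[OF iK Kl ok1])
      qed
    qed
  qed
qed



lemma MODL: assumes "r < (m::nat)" shows "(e * m + r) mod (n * m) = (e mod n) * m + r"
proof (cases "n = 0")
  case True then show ?thesis by simp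
next
  case False
  define q where "q = e div n"
  define s where "s = e mod n"
  have e0: "e = q * n + s" unfolding q_def s_def by simp
  have e: "e * m + r = q * (n * m) + (s * m + r)" unfolding e0 by (simp add: algebra_simps)
  have "s < n" using False unfolding s_def by simp
  then have "s + 1 \<le> n" by simp
  then have "(s + 1) * m \<le> n * m" by (rule mult_right_mono) simp
  then have lt: "s * m + r < n * m" using assms by (simp add: distrib_right)
  have "(q * (n * m) + (s * m + r)) mod (n * m) = (s * m + r) mod (n * m)"
    by (metis mod_mult_self3)
  also have "\<dots> = s * m + r" using lt by simp
  finally show ?thesis unfolding e s_def .
qed

lemma rot_fix: assumes "length b = n" "n > 0"
  shows "rotate (r1 + (r2 + (n - r1 mod n))) b = rotate r2 b"
proof -
  define q where "q = r1 div n"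
  define s where "s = r1 mod n"
  have r1: "r1 = q * n + s" unfolding q_def s_def by simp
  have sn: "s < n" using assms unfolding s_def by simp
  have eq: "r1 + (r2 + (n - r1 mod n)) = r2 + (q + 1) * n"
    unfolding r1 using sn by (simp add: s_def[symmetric] algebra_simps)
  have "(r1 + (r2 + (n - r1 mod n))) mod n = r2 mod n" unfolding eq by (rule mod_mult_self1)
  then show ?thesis using assms(1) rotate_conv_mod by metis
qed

lemma conc_prefix: assumes "conc l w = conc l' w'" "length l \<le> length l'"
  shows "l' = l @ drop (length l) l'"
proof -
  have "take (length l) l' = l"
  proof (rule nth_equalityI)
    show "length (take (length l) l') = length l" using assms(2) by simp
    fix n assume "n < length (take (length l) l')"
    then have n: "n < length l" by simp
    have "conc l w n = conc l' w' n" using assms(1) by simp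
    then show "take (length l) l' ! n = l ! n" using n assms(2) by (simp add: conc_def)
  qed
  then show ?thesis by (metis append_take_drop_id)
qed

lemma conc_leaf_unique: assumes "i < length (lvs t)" "j < length (lvs t)"
  "conc (lvs t ! i) w = conc (lvs t ! j) w'" shows "i = j"
proof (cases "length (lvs t ! i) \<le> length (lvs t ! j)")
  case True
  then have "lvs t ! j = lvs t ! i @ drop (length (lvs t ! i)) (lvs t ! j)" using conc_prefix assms(3) by blast
  then show ?thesis using leaf_unique[OF assms(1,2), of "drop (length (lvs t ! i)) (lvs t ! j)" "[]"] by simp
next
  case False
  then have "lvs t ! i = lvs t ! j @ drop (length (lvs t ! j)) (lvs t ! i)" using conc_prefix assms(3)[symmetric] by simp
  then show ?thesis using leaf_unique[OF assms(2,1), of "drop (length (lvs t ! j)) (lvs t ! i)" "[]"] by simp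
qed

definition vmap :: "tr \<Rightarrow> tr \<Rightarrow> nat \<Rightarrow> (nat \<Rightarrow> bool) \<Rightarrow> (nat \<Rightarrow> bool)" where
  "vmap tL tR c \<omega> = (let k = length (lvs tL); i = (THE i. i < k \<and> (\<exists>w. \<omega> = conc (lvs tL ! i) w)) in
     conc (lvs tR ! ((i + c) mod k)) (\<lambda>n. \<omega> (n + length (lvs tL ! i))))"

lemma vmap_rep: assumes "length (lvs tR) = length (lvs tL)"
  shows "thompson_rep (vmap tL tR c) (wds tL) (wds tR) c"
  unfolding rep_unfold
proof (intro conjI allI impI)
  show "length (lvs tR) = length (lvs tL)" by (rule assms)
  fix i w assume i: "i < length (lvs tL)"
  have th: "(THE i'. i' < length (lvs tL) \<and> (\<exists>w'. conc (lvs tL ! i) w = conc (lvs tL ! i') w')) = i"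
  proof (rule the_equality)
    show "i < length (lvs tL) \<and> (\<exists>w'. conc (lvs tL ! i) w = conc (lvs tL ! i) w')" using i by blast
  next
    fix i' assume "i' < length (lvs tL) \<and> (\<exists>w'. conc (lvs tL ! i) w = conc (lvs tL ! i') w')"
    then obtain w' where "i' < length (lvs tL)" "conc (lvs tL ! i) w = conc (lvs tL ! i') w'" by blast
    then show "i' = i" using conc_leaf_unique[OF i] by metis
  qed
  have "(\<lambda>n. conc (lvs tL ! i) w (n + length (lvs tL ! i))) = w" by (rule ext) (simp add: conc_def)
  then show "vmap tL tR c (conc (lvs tL ! i) w) = conc (lvs tR ! ((i + c) mod length (lvs tL))) w"
    unfolding vmap_def Let_def th by simp
qed

lemma sorted_zs: "sorted_wrt zlt (zs t)"
  using sorted_nds[of t] by (simp add: zs_def sorted_wrt_append sorted_wrt_map)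

lemma POS: assumes "sorted_wrt zlt a" "set a \<subseteq> set (zs t)"
  shows "\<exists>ps. length ps = length a \<and> sorted_wrt (<) ps \<and> (\<forall>p\<in>set ps. p < length (lvs t)) \<and>
     (\<forall>j<length a. zs t ! (ps ! j) = a ! j)"
proof -
  have "\<forall>z\<in>set a. \<exists>p. p < length (lvs t) \<and> zs t ! p = z"
  proof
    fix z assume "z \<in> set a"
    then have "z \<in> set (zs t)" using assms(2) by blast
    then obtain p where "p < length (zs t)" "zs t ! p = z" by (auto simp: in_set_conv_nth)
    then show "\<exists>p. p < length (lvs t) \<and> zs t ! p = z" using length_zs[of t] by auto
  qed
  then obtain pos where pos0: "\<forall>z\<in>set a. pos z < length (lvs t) \<and> zs t ! pos z = z"
    by (rule bchoice[elim_format]) blast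
  then have pos: "\<And>z. z \<in> set a \<Longrightarrow> pos z < length (lvs t) \<and> zs t ! pos z = z" by blast
  define ps where "ps = map pos a"
  have sz: "\<And>p q. p < q \<Longrightarrow> q < length (lvs t) \<Longrightarrow> zv (zs t ! p) < zv (zs t ! q)"
    using sorted_zs[of t] length_zs[of t] by (simp add: sorted_wrt_iff_nth_less zlt_zv)
  have sa: "\<And>i j. i < j \<Longrightarrow> j < length a \<Longrightarrow> zv (a ! i) < zv (a ! j)"
    using assms(1) by (simp add: sorted_wrt_iff_nth_less zlt_zv)
  have "sorted_wrt (<) ps"
    unfolding sorted_wrt_iff_nth_less
  proof (intro allI impI)
    fix i j assume ij0: "i < j" "j < length ps"
    then have ij: "i < j \<and> j < length ps" by blast
    then have ai: "a ! i \<in> set a" and aj: "a ! j \<in> set a" by (auto simp: ps_def)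
    have lt: "zv (a ! i) < zv (a ! j)" using sa ij by (simp add: ps_def)
    show "ps ! i < ps ! j"
    proof (rule ccontr)
      assume "\<not> ps ! i < ps ! j"
      then have "pos (a ! j) \<le> pos (a ! i)" using ij by (simp add: ps_def)
      then consider "pos (a ! j) = pos (a ! i)" | "pos (a ! j) < pos (a ! i)" by linarith
      then show False
      proof cases
        case 1 then show ?thesis using pos[OF ai] pos[OF aj] lt by simp
      next
        case 2 then show ?thesis using sz[OF 2] pos[OF ai] pos[OF aj] lt by simp
      qed
    qed
  qed
  then show ?thesis using pos unfolding ps_def by (intro exI[of _ "map pos a"]) auto
qed



lemma TGT: assumes sa: "sorted_wrt zlt a" and sub: "set a \<subseteq> set (zs t)" and ne: "a \<noteq> []"
  and KG: "length (lvs t) \<le> G"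
  shows "\<exists>t' P. P \<le> G \<and> length (lvs t') = length a * (G + 1) \<and> (\<forall>j<length a. zs t' ! (P + j * (G + 1)) = a ! j)"
proof -
  obtain ps where ps: "length ps = length a" "sorted_wrt (<) ps" "\<forall>p\<in>set ps. p < length (lvs t)"
    "\<forall>j<length a. zs t ! (ps ! j) = a ! j" using POS[OF sa sub] by blast
  define n where "n = length a"
  obtain m where nm: "n = Suc m" using ne unfolding n_def by (cases a) auto
  define K where "K = length (lvs t)"
  define tail where "tail = K - 1 - ps ! m"
  define P where "P = G - tail"
  define ps' where "ps' = map (\<lambda>j. P + j * (G + 1)) [0..<n]"
  define k' where "k' = n * (G + 1)"
  define X where "X = m * (G + 1)"
  have lps: "length ps = n" using ps(1) n_def by simp
  have psm: "ps ! m < K" using ps(3) lps nm K_def by simp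
  have ps0: "ps ! 0 \<le> ps ! m"
  proof (cases "m = 0")
    case False
    then show ?thesis using sorted_wrt_nth_less[OF ps(2), of 0 m] lps nm by simp
  qed simp
  have bdj: "\<And>j. j < n \<Longrightarrow> ps ! j < K" using ps(3) lps K_def by auto
  have ps'j: "\<And>j. j < n \<Longrightarrow> ps' ! j = P + j * (G + 1)" by (simp add: ps'_def)
  have tailG: "tail + ps ! 0 < G" using psm ps0 KG K_def tail_def by linarith
  have PG: "P \<le> G" by (simp add: P_def)
  have k'X: "k' = X + G + 1" by (simp add: k'_def X_def nm)
  have okt: "ok t ps ps' k'"
    unfolding ok_def lps
  proof (intro conjI allI impI ballI)
    show "ps \<noteq> []" using lps nm by auto
    show "length ps' = n" by (simp add: ps'_def)
    show "sorted_wrt (<) ps" by (rule ps(2))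
    fix p assume "p \<in> set ps" then show "p < length (lvs t)" using ps(3) by blast
  next
    show "sorted_wrt (<) ps'" unfolding sorted_wrt_iff_nth_less
    proof (intro allI impI)
      fix i j assume "i < j" "j < length ps'"
      then have "j < n" by (simp add: ps'_def)
      have "i * (G + 1) < j * (G + 1)" using \<open>i < j\<close> by (intro mult_strict_right_mono) auto
      then show "ps' ! i < ps' ! j" using ps'j[of i] ps'j[of j] \<open>i < j\<close> \<open>j < n\<close> by simp
    qed
    show "ps' ! (n - 1) < k'" using ps'j[of m] nm PG k'X X_def by simp
    show "ps ! 0 \<le> ps' ! 0" using ps'j[of 0] nm tailG P_def by simp
    show "length (lvs t) - ps ! (n - 1) \<le> k' - ps' ! (n - 1)"
      using ps'j[of m] nm k'X X_def P_def tail_def psm K_def tailG by simp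
  next
    fix j assume j: "0 < j \<and> j < n"
    then have e: "j * (G + 1) = (j - 1) * (G + 1) + (G + 1)" by (cases j) auto
    have "ps ! j - ps ! (j - 1) \<le> K" using bdj[of j] j by linarith
    also have "\<dots> \<le> G + 1" using KG K_def by simp
    also have "\<dots> = ps' ! j - ps' ! (j - 1)"
    proof -
      have a: "ps' ! j = P + (j - 1) * (G + 1) + (G + 1)" using ps'j[of j] j e by simp
      have jn: "j - 1 < n" using j by linarith
      have b: "ps' ! (j - 1) = P + (j - 1) * (G + 1)" by (rule ps'j[OF jn])
      show ?thesis unfolding a b by simp
    qed
    finally show "ps ! j - ps ! (j - 1) \<le> ps' ! j - ps' ! (j - 1)" .
  next
    assume "ps ! (n - 1) = length (lvs t) - 1"
    then have "tail = 0" using nm tail_def K_def by simp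
    then show "ps' ! (n - 1) = k' - 1" using ps'j[of m] nm k'X X_def P_def by simp
  qed
  obtain t' where t': "length (lvs t') = k'" "\<forall>j<n. zs t' ! (ps' ! j) = zs t ! (ps ! j)"
    using PT_aux okt lps by blast
  show ?thesis
    using t' ps(4) ps'j PG unfolding k'_def n_def by (intro exI[of _ t'] exI[of _ P]) simp
qed



fun zlen :: "zel \<Rightarrow> nat" where "zlen (W x) = length x" | "zlen Zeta = 0"

lemma Zeta_zs: "Zeta \<in> set (zs t)" by (simp add: zs_def)

lemma rot_back: assumes "length xs = n" "n > 0" shows "rotate (n - k mod n) (rotate k xs) = xs"
proof -
  have "rotate (n - k mod n) (rotate k xs) = rotate (k + (0 + (n - k mod n))) xs"
    by (simp add: rotate_rotate add.commute)
  also have "\<dots> = rotate 0 xs" using rot_fix[OF assms, of k 0] .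
  finally show ?thesis by simp
qed

lemma part2: assumes xs: "xs \<in> Lambda n" and ys: "ys \<in> Lambda n"
  shows "\<exists>t\<in>ThompsonT. map (iota t) xs = ys"
proof (cases "n = 0")
  case True
  then have "xs = []" "ys = []" using xs ys unfolding Lambda_def by auto
  moreover have "vmap Lf Lf 0 \<in> ThompsonT" unfolding ThompsonT_def using vmap_rep[of Lf Lf 0] by auto
  ultimately show ?thesis by auto
next
  case False
  then have npos: "n > 0" by simp
  from xs obtain k1 where lx: "length xs = n" and dx: "distinct xs" and sx: "sorted_wrt zlt (rotate k1 xs)"
    unfolding Lambda_def by blast
  from ys obtain k2 where ly: "length ys = n" and dy: "distinct ys" and sy: "sorted_wrt zlt (rotate k2 ys)"
    unfolding Lambda_def by blast
  define a where "a = rotate k1 xs"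
  define b where "b = rotate k2 ys"
  have la: "length a = n" and lb: "length b = n" using lx ly by (auto simp: a_def b_def)
  define D where "D = Suc (sum_list (map zlen (xs @ ys)))"
  define F where "F = full D"
  have inF: "z \<in> set (zs F)" if "z \<in> set xs \<or> z \<in> set ys" for z
  proof (cases z)
    case (W x)
    have "zlen z \<le> sum_list (map zlen (xs @ ys))" using that by (intro member_le_sum_list) auto
    then have "length x < D" using W D_def by simp
    then have "x \<in> set (nds F)" using nds_full unfolding F_def by blast
    then show ?thesis using W by (simp add: zs_def)
  qed (simp add: Zeta_zs)
  have sa: "set a \<subseteq> set (zs F)" using inF by (auto simp: a_def)
  have sb: "set b \<subseteq> set (zs F)" using inF by (auto simp: b_def)
  define G where "G = length (lvs F)"
  have ne_a: "a \<noteq> []" and ne_b: "b \<noteq> []" using la lb npos by auto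
  obtain tL PL where tL: "PL \<le> G" "length (lvs tL) = n * (G + 1)" "\<forall>j<n. zs tL ! (PL + j * (G + 1)) = a ! j"
    using TGT[OF sx[folded a_def] sa ne_a, of G] la G_def by auto
  obtain tR PR where tR: "PR \<le> G" "length (lvs tR) = n * (G + 1)" "\<forall>j<n. zs tR ! (PR + j * (G + 1)) = b ! j"
    using TGT[OF sy[folded b_def] sb ne_b, of G] lb G_def by auto
  define k where "k = n * (G + 1)"
  define r1 where "r1 = n - k1 mod n"
  define r2 where "r2 = n - k2 mod n"
  define d where "d = r2 + (n - r1 mod n)"
  define c where "c = (d mod n) * (G + 1) + PR + k - PL"
  define v where "v = vmap tL tR c"
  have kR: "length (lvs tR) = length (lvs tL)" using tL tR by simp
  have rep: "thompson_rep v (wds tL) (wds tR) c" unfolding v_def by (rule vmap_rep[OF kR])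
  have vT: "v \<in> ThompsonT" unfolding ThompsonT_def using rep by blast
  have io: "iota v = iota_data (wds tL) (wds tR) c" by (rule iota_eq[OF rep])
  have nG: "G < k"
  proof -
    have "1 * (G + 1) \<le> n * (G + 1)" using npos by (intro mult_right_mono) auto
    then show ?thesis unfolding k_def by simp
  qed
  have act: "iota v (a ! j) = b ! ((j + d) mod n)" if j: "j < n" for j
  proof -
    obtain m where nm: "n = Suc m" using npos by (cases n) auto
    have jm: "j * (G + 1) \<le> m * (G + 1)" using j nm by (intro mult_right_mono) auto
    have idx: "PL + j * (G + 1) < length (lvs tL)"
      using tL(1,2) jm nm by simp
    have "iota v (a ! j) = zs tR ! ((PL + j * (G + 1) + c) mod length (lvs tL))"
      using io ID_node[OF idx, of tR c] tL(3) j by simp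
    also have "PL + j * (G + 1) + c = (j + d mod n + n) * (G + 1) + PR"
      using tL(1) nG unfolding c_def k_def by (simp add: algebra_simps)
    also have "((j + d mod n + n) * (G + 1) + PR) mod length (lvs tL) = ((j + d mod n + n) mod n) * (G + 1) + PR"
      using tL(2) tR(1) MODL[of PR "G + 1" "j + d mod n + n" n] by simp
    also have "(j + d mod n + n) mod n = (j + d) mod n" by (simp add: mod_simps)
    finally show ?thesis using tR(3) npos by (simp add: add.commute)
  qed
  have ma: "map (iota v) a = rotate d b"
  proof (rule nth_equalityI)
    show "length (map (iota v) a) = length (rotate d b)" using la lb by simp
    fix j assume "j < length (map (iota v) a)"
    then have j: "j < n" using la by simp
    show "map (iota v) a ! j = rotate d b ! j"
      using act[OF j] j la lb by (simp add: nth_rotate add.commute)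
  qed
  have xa: "xs = rotate r1 a" unfolding r1_def a_def using rot_back[OF lx npos] by simp
  have yb: "ys = rotate r2 b" unfolding r2_def b_def using rot_back[OF ly npos] by simp
  have "map (iota v) xs = rotate r1 (rotate d b)" unfolding xa by (metis rotate_map ma)
  also have "\<dots> = rotate (r1 + (r2 + (n - r1 mod n))) b" by (simp add: rotate_rotate d_def)
  also have "\<dots> = rotate r2 b" by (rule rot_fix[OF lb npos])
  finally show ?thesis using vT yb by blast
qed

theorem lemma3p8:
  fixes n :: nat
  shows "(\<forall>t\<in>ThompsonT. \<forall>xs\<in>Lambda n. map (iota t) xs \<in> Lambda n)
       \<and> (\<forall>xs\<in>Lambda n. \<forall>ys\<in>Lambda n. \<exists>t\<in>ThompsonT. map (iota t) xs = ys)"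
  using part1 part2 by blast


end
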